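(* Let $\mathcal{G}$ be an étale groupoid injectively graded by a countable discrete abelian group $A$ via $\Phi:\mathcal{G}\to A$, let $c:\mathcal{G}\to\mathbb{R}$ be a continuous groupoid homomorphism, $\beta\in\mathbb{R}$, and let $\mu\in\Delta(e^{-\beta c})\setminus\{0\}$ be ergodic. Then: (1) for every subgroup $C\subseteq A$, the set $X(C)=\{x\in\mathcal{G}^{(0)}:\Phi(\mathcal{G}^x_x)=C\}$ is Borel and invariant; (2) there is a unique subgroup $B\subseteq A$ with $\mu(\mathcal{G}^{(0)}\setminus X(B))=0$; (3) for $x\in X(B)$ let $\Phi_x:C^*(\mathcal{G}^x_x)\to C^*(B)$ be the isomorphism induced by $\Phi|_{\mathcal{G}^x_x}$ ($u_g\mapsto u_{\Phi(g)}$); if $\{\varphi_x\}_{x\in\mathcal{G}^{(0)}}$ is a $\mu$-measurable field of states with $\varphi_x(u_g)=\varphi_{r(h)}(u_{hgh^{-1}})$ for $\mu$-a.e. $x$ and all $g\in\mathcal{G}^x_x$, $h\in\mathcal{G}_x$, then there is a state $\varphi$ on $C^*(B)$ such that $\varphi\circ\Phi_x=\varphi_x$ for $\mu$-a.e. $x\in X(B)$.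
   Context: Étale groupoid: locally compact second countable Hausdorff groupoid with range $r$, source $s$ local homeomorphisms; $\mathcal{G}_x=s^{-1}(x)$, $\mathcal{G}^x_x=r^{-1}(x)\cap s^{-1}(x)$. $\mathcal{G}$ is injectively graded by $A$ via $\Phi$ if $\Phi:\mathcal{G}\to A$ is a continuous groupoid homomorphism with $\ker(\Phi)\cap\mathcal{G}^x_x=\{x\}$ for all $x\in\mathcal{G}^{(0)}$. $\Delta(e^{-\beta c})$: regular Borel measures on $\mathcal{G}^{(0)}$ quasi-invariant with Radon–Nikodym cocycle $e^{-\beta c}$, i.e. $\mu_r\sim\mu_s$ and $d\mu_r/d\mu_s=e^{-\beta c}$, where $\int f\,d\mu_r=\int\sum_{g\in r^{-1}(x)}f(g)\,d\mu(x)$, $\int f\,d\mu_s=\int\sum_{g\in s^{-1}(x)}f(g)\,d\mu(x)$ for $f\in C_c(\mathcal{G})$. A set $Y\subseteq\mathcal{G}^{(0)}$ is invariant if $Y=r(s^{-1}(Y))$; $\mu$ is ergodic if every invariant Borel set is null or conull. $u_g$ denote canonical unitaries in group $C^*$-algebras. A $\mu$-measurable field of states is a family of states $\varphi_x$ on $C^*(\mathcal{G}^x_x)$ with $x\mapsto\sum_{g\in\mathcal{G}^x_x}f(g)\varphi_x(u_g)$ $\mu$-measurable for all $f\in C_c(\mathcal{G})$. *)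

theory Defs
  imports "HOL-Analysis.Analysis"
begin

text \<open>An etale groupoid is modelled on the whole type 'g (the arrows), with a
unit space G0, range r, source s, multiplication mul (g h is defined iff s g = r h;
mul is an arbitrary total function outside composable pairs) and inversion iv.
The topology of 'g is the type's topology; second countability and Hausdorffness
are type-class constraints in the theorem; local compactness is assumed below.\<close>

definition local_homeo_onto :: "('g::topological_space \<Rightarrow> 'g) \<Rightarrow> 'g set \<Rightarrow> bool" where
  "local_homeo_onto f G0 \<longleftrightarrow>
     (\<forall>g. \<exists>U V h. open U \<and> g \<in> U \<and> openin (top_of_set G0) V \<and> homeomorphism U V f h)"

definition etale_groupoid ::
  "'g::topological_space set \<Rightarrow> ('g \<Rightarrow> 'g) \<Rightarrow> ('g \<Rightarrow> 'g) \<Rightarrow> ('g \<Rightarrow> 'g \<Rightarrow> 'g) \<Rightarrow> ('g \<Rightarrow> 'g) \<Rightarrow> bool"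
  where
  "etale_groupoid G0 r s mul iv \<longleftrightarrow>
     (\<forall>g. r g \<in> G0 \<and> s g \<in> G0) \<and>
     (\<forall>x\<in>G0. r x = x \<and> s x = x) \<and>
     (\<forall>g h. s g = r h \<longrightarrow> r (mul g h) = r g \<and> s (mul g h) = s h) \<and>
     (\<forall>g h k. s g = r h \<and> s h = r k \<longrightarrow> mul (mul g h) k = mul g (mul h k)) \<and>
     (\<forall>g. mul (r g) g = g \<and> mul g (s g) = g) \<and>
     (\<forall>g. r (iv g) = s g \<and> s (iv g) = r g \<and> mul g (iv g) = r g \<and> mul (iv g) g = s g) \<and>
     locally_compact_space (euclidean :: 'g topology) \<and>
     continuous_on {(g, h). s g = r h} (\<lambda>(g, h). mul g h) \<and>
     continuous_on UNIV iv \<and>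
     local_homeo_onto r G0 \<and> local_homeo_onto s G0"

definition isotropy :: "('g \<Rightarrow> 'g) \<Rightarrow> ('g \<Rightarrow> 'g) \<Rightarrow> 'g \<Rightarrow> 'g set" where
  "isotropy r s x = {g. r g = x \<and> s g = x}"

definition groupoid_hom ::
  "('g \<Rightarrow> 'g) \<Rightarrow> ('g \<Rightarrow> 'g) \<Rightarrow> ('g \<Rightarrow> 'g \<Rightarrow> 'g) \<Rightarrow> ('g \<Rightarrow> 'a::ab_group_add) \<Rightarrow> bool" where
  "groupoid_hom r s mul F \<longleftrightarrow> (\<forall>g h. s g = r h \<longrightarrow> F (mul g h) = F g + F h)"

text \<open>Injective grading by a (countable) discrete abelian group A: Phi is continuous into
the discrete topology on A (i.e. every fibre is open), a groupoid homomorphism, and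
its kernel meets each isotropy group only in the unit.\<close>
definition injectively_graded ::
  "'g::topological_space set \<Rightarrow> ('g \<Rightarrow> 'g) \<Rightarrow> ('g \<Rightarrow> 'g) \<Rightarrow> ('g \<Rightarrow> 'g \<Rightarrow> 'g) \<Rightarrow> ('g \<Rightarrow> 'a::ab_group_add) \<Rightarrow> bool"
  where
  "injectively_graded G0 r s mul Phi \<longleftrightarrow>
     (\<forall>a. open (Phi -` {a})) \<and> groupoid_hom r s mul Phi \<and>
     (\<forall>x\<in>G0. {g \<in> isotropy r s x. Phi g = 0} = {x})"

definition subgroup_of :: "'a::ab_group_add set \<Rightarrow> bool" where
  "subgroup_of C \<longleftrightarrow> 0 \<in> C \<and> (\<forall>a\<in>C. \<forall>b\<in>C. a + b \<in> C \<and> - a \<in> C)"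

definition Cc :: "('g::topological_space \<Rightarrow> complex) \<Rightarrow> bool" where
  "Cc f \<longleftrightarrow> continuous_on UNIV f \<and> compact (closure {g. f g \<noteq> 0})"

definition invariant_set :: "('g \<Rightarrow> 'g) \<Rightarrow> ('g \<Rightarrow> 'g) \<Rightarrow> 'g set \<Rightarrow> bool" where
  "invariant_set r s Y \<longleftrightarrow> Y = r ` (s -` Y)"

definition regular_borel_on :: "'g::topological_space set \<Rightarrow> 'g measure \<Rightarrow> bool" where
  "regular_borel_on G0 \<mu> \<longleftrightarrow>
     space \<mu> = G0 \<and> sets \<mu> = sets (restrict_space borel G0) \<and>
     (\<forall>K. compact K \<and> K \<subseteq> G0 \<longrightarrow> emeasure \<mu> K < \<infinity>) \<and>
     (\<forall>E\<in>sets \<mu>. emeasure \<mu> E =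
        (INF U\<in>{U. openin (top_of_set G0) U \<and> E \<subseteq> U}. emeasure \<mu> U)) \<and>
     (\<forall>U. openin (top_of_set G0) U \<longrightarrow> emeasure \<mu> U =
        (SUP K\<in>{K. compact K \<and> K \<subseteq> U}. emeasure \<mu> K))"

definition Delta ::
  "'g::topological_space set \<Rightarrow> ('g \<Rightarrow> 'g) \<Rightarrow> ('g \<Rightarrow> 'g) \<Rightarrow> ('g \<Rightarrow> real) \<Rightarrow> real \<Rightarrow> 'g measure \<Rightarrow> bool"
  where
  "Delta G0 r s c \<beta> \<mu> \<longleftrightarrow> regular_borel_on G0 \<mu> \<and>
     (\<forall>f. Cc f \<longrightarrow>
        integral\<^sup>L \<mu> (\<lambda>x. infsum f (r -` {x}))
        = integral\<^sup>L \<mu> (\<lambda>x. infsum (\<lambda>g. f g * complex_of_real (exp (- \<beta> * c g))) (s -` {x})))"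

definition ergodic :: "'g set \<Rightarrow> ('g \<Rightarrow> 'g) \<Rightarrow> ('g \<Rightarrow> 'g) \<Rightarrow> 'g measure \<Rightarrow> bool" where
  "ergodic G0 r s \<mu> \<longleftrightarrow>
     (\<forall>Y\<in>sets \<mu>. invariant_set r s Y \<longrightarrow> emeasure \<mu> Y = 0 \<or> emeasure \<mu> (G0 - Y) = 0)"

text \<open>A state on the full group C*-algebra C*(H) of a discrete group H
(with product mul, inverse iv, unit e) is represented by its values psi h = state(u_h);
these are exactly the normalized positive definite functions on H.\<close>
definition group_state :: "'x set \<Rightarrow> ('x \<Rightarrow> 'x \<Rightarrow> 'x) \<Rightarrow> ('x \<Rightarrow> 'x) \<Rightarrow> 'x \<Rightarrow> ('x \<Rightarrow> complex) \<Rightarrow> bool"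
  where
  "group_state H mul iv e \<psi> \<longleftrightarrow> \<psi> e = 1 \<and>
     (\<forall>n (hs :: nat \<Rightarrow> 'x) (cs :: nat \<Rightarrow> complex). (\<forall>i<n. hs i \<in> H) \<longrightarrow>
        (let S = (\<Sum>i<n. \<Sum>j<n. cs i * cnj (cs j) * \<psi> (mul (iv (hs j)) (hs i)))
         in S \<in> \<real> \<and> 0 \<le> Re S))"

definition X_set :: "'g set \<Rightarrow> ('g \<Rightarrow> 'g) \<Rightarrow> ('g \<Rightarrow> 'g) \<Rightarrow> ('g \<Rightarrow> 'a) \<Rightarrow> 'a set \<Rightarrow> 'g set" where
  "X_set G0 r s Phi C = {x\<in>G0. Phi ` isotropy r s x = C}"

text \<open>mu-measurable field of states: phi x g = phi_x(u_g) for g in the isotropy at x.\<close>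
definition measurable_state_field ::
  "'g::topological_space set \<Rightarrow> ('g \<Rightarrow> 'g) \<Rightarrow> ('g \<Rightarrow> 'g) \<Rightarrow> ('g \<Rightarrow> 'g \<Rightarrow> 'g) \<Rightarrow> ('g \<Rightarrow> 'g)
     \<Rightarrow> 'g measure \<Rightarrow> ('g \<Rightarrow> 'g \<Rightarrow> complex) \<Rightarrow> bool" where
  "measurable_state_field G0 r s mul iv \<mu> \<phi> \<longleftrightarrow>
     (\<forall>x\<in>G0. group_state (isotropy r s x) mul iv x (\<phi> x)) \<and>
     (\<forall>f. Cc f \<longrightarrow>
        (\<lambda>x. infsum (\<lambda>g. f g * \<phi> x g) (isotropy r s x)) \<in> borel_measurable (completion \<mu>))"

end

theory Submission
  imports Defs "HOL-Analysis.Analysis"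
begin
lemma borel_image_homeo:
  fixes f :: "'a::topological_space \<Rightarrow> 'b::topological_space"
  assumes H: "homeomorphism U V f h" and V: "V \<in> sets borel" and E: "E \<in> sets borel" "E \<subseteq> U"
  shows "f ` E \<in> sets borel"
proof -
  have eq: "f ` E = h -` E \<inter> space (restrict_space borel V)"
    using H E(2) unfolding homeomorphism_def space_restrict_space by auto
  have "continuous_on V h" using H homeomorphism_cont2 by blast
  then have "h \<in> borel_measurable (restrict_space borel V)"
    by (rule borel_measurable_continuous_on_restrict)
  then have "f ` E \<in> sets (restrict_space borel V)"
    unfolding eq using E(1) by (rule measurable_sets)
  then show ?thesis using V by (simp add: sets_restrict_space_iff)
qed

context
  fixes G0 :: "'g::{t2_space, second_countable_topology} set"
    and r s :: "'g \<Rightarrow> 'g" and mul :: "'g \<Rightarrow> 'g \<Rightarrow> 'g" and iv :: "'g \<Rightarrow> 'g"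
  assumes G: "etale_groupoid G0 r s mul iv"
begin

lemma rs_in: "r g \<in> G0" "s g \<in> G0" using G unfolding etale_groupoid_def by auto
lemma unit_rs: "x \<in> G0 \<Longrightarrow> r x = x" "x \<in> G0 \<Longrightarrow> s x = x" using G unfolding etale_groupoid_def by auto
lemma mul_rs: "s g = r h \<Longrightarrow> r (mul g h) = r g" "s g = r h \<Longrightarrow> s (mul g h) = s h"
  using G unfolding etale_groupoid_def by auto
lemma assoc: "s g = r h \<Longrightarrow> s h = r k \<Longrightarrow> mul (mul g h) k = mul g (mul h k)"
  using G unfolding etale_groupoid_def by blast
lemma unit_mul: "mul (r g) g = g" "mul g (s g) = g" using G unfolding etale_groupoid_def by auto
lemma iv_props: "r (iv g) = s g" "s (iv g) = r g" "mul g (iv g) = r g" "mul (iv g) g = s g"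
  using G unfolding etale_groupoid_def by auto

lemma G0_eq: "G0 = {g. r g = g}"
proof (rule set_eqI, rule iffI)
  fix g assume "g \<in> G0" then show "g \<in> {g. r g = g}" using unit_rs by simp
next
  fix g assume "g \<in> {g. r g = g}" then have "g = r g" by simp
  then show "g \<in> G0" using rs_in(1)[of g] by simp
qed

lemma lh_r: "local_homeo_onto r G0" and lh_s: "local_homeo_onto s G0"
  using G unfolding etale_groupoid_def by auto

lemma lh_cont: assumes "local_homeo_onto f G0" shows "continuous_on UNIV f"
proof -
  have "isCont f g" for g
  proof -
    obtain U V h where "open U" "g \<in> U" "homeomorphism U V f h"
      using assms unfolding local_homeo_onto_def by blast
    then show ?thesis
      by (meson continuous_on_eq_continuous_at homeomorphism_cont1)
  qed
  then show ?thesis by (simp add: continuous_at_imp_continuous_on)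
qed

lemma r_cont: "continuous_on UNIV r" using lh_cont lh_r by blast
lemma s_cont: "continuous_on UNIV s" using lh_cont lh_s by blast

lemma G0_closed: "closed G0"
  unfolding G0_eq using closed_Collect_eq[OF r_cont continuous_on_id] by simp

lemma G0_borel: "G0 \<in> sets borel" using G0_closed by auto


lemma r_image_borel:
  assumes Z: "Z \<in> sets borel" shows "r ` Z \<in> sets borel"
proof -
  let ?F = "{U. open U \<and> (\<exists>V h. openin (top_of_set G0) V \<and> homeomorphism U V r h)}"
  obtain F' where F': "F' \<subseteq> ?F" "countable F'" "\<Union>F' = \<Union>?F"
    using Lindelof[of ?F] by blast
  have cov: "\<Union>?F = UNIV"
  proof -
    have "g \<in> \<Union>?F" for g
    proof -
      obtain U V h where "open U" "g \<in> U" "openin (top_of_set G0) V" "homeomorphism U V r h"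
        using lh_r unfolding local_homeo_onto_def by blast
      then show ?thesis by (intro UnionI[of U]) auto
    qed
    then show ?thesis by blast
  qed
  have eq: "r ` Z = (\<Union>U\<in>F'. r ` (U \<inter> Z))"
  proof (rule set_eqI)
    fix y show "y \<in> r ` Z \<longleftrightarrow> y \<in> (\<Union>U\<in>F'. r ` (U \<inter> Z))"
    proof
      assume "y \<in> r ` Z"
      then obtain z where z: "z \<in> Z" "y = r z" by blast
      have "z \<in> \<Union>F'" using F'(3) cov by simp
      then obtain U where "U \<in> F'" "z \<in> U" by blast
      then show "y \<in> (\<Union>U\<in>F'. r ` (U \<inter> Z))" using z by blast
    qed blast
  qed
  have "r ` (U \<inter> Z) \<in> sets borel" if UF: "U \<in> F'" for U
  proof -
    obtain V h where U: "open U" "openin (top_of_set G0) V" "homeomorphism U V r h"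
      using F'(1) UF by blast
    have Vb: "V \<in> sets borel"
      using U(2) G0_borel by (metis borel_open openin_open sets.Int)
    show ?thesis
      by (rule borel_image_homeo[OF U(3) Vb]) (use Z U(1) in auto)
  qed
  then show ?thesis unfolding eq using F'(2) by (intro sets.countable_UN'') auto
qed

end

context
  fixes G0 :: "'g::{t2_space, second_countable_topology} set"
    and r s :: "'g \<Rightarrow> 'g" and mul :: "'g \<Rightarrow> 'g \<Rightarrow> 'g" and iv :: "'g \<Rightarrow> 'g"
    and Phi :: "'g \<Rightarrow> 'a::{ab_group_add, countable}"
  assumes G: "etale_groupoid G0 r s mul iv"
    and gr: "injectively_graded G0 r s mul Phi"
begin

lemma Phi_mul: "s g = r h \<Longrightarrow> Phi (mul g h) = Phi g + Phi h"
  using gr unfolding injectively_graded_def groupoid_hom_def by blast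

lemma Phi_unit: assumes "x \<in> G0" shows "Phi x = 0"
proof -
  have "x \<in> {g \<in> isotropy r s x. Phi g = 0}"
    using gr assms unfolding injectively_graded_def by blast
  then show ?thesis by simp
qed

lemma Phi_iv: "Phi (iv g) = - Phi g"
proof -
  have "Phi (mul g (iv g)) = Phi g + Phi (iv g)"
    using Phi_mul iv_props[OF G] by metis
  moreover have "Phi (mul g (iv g)) = 0"
    using iv_props[OF G] Phi_unit rs_in[OF G] by metis
  ultimately show ?thesis by (simp add: eq_neg_iff_add_eq_0 add.commute)
qed

lemma iso_kernel: "x \<in> G0 \<Longrightarrow> g \<in> isotropy r s x \<Longrightarrow> Phi g = 0 \<Longrightarrow> g = x"
  using gr unfolding injectively_graded_def by blast

lemma iso_inj:
  assumes x: "x \<in> G0" and g1: "g1 \<in> isotropy r s x" and g2: "g2 \<in> isotropy r s x"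
    and eq: "Phi g1 = Phi g2"
  shows "g1 = g2"
proof -
  have r1: "r g1 = x" "s g1 = x" and r2: "r g2 = x" "s g2 = x"
    using g1 g2 unfolding isotropy_def by auto
  let ?k = "mul (iv g2) g1"
  have c: "s (iv g2) = r g1" using iv_props[OF G] r1 r2 by simp
  have "r ?k = x" using mul_rs[OF G c] iv_props[OF G] r2 by simp
  moreover have "s ?k = x" using mul_rs[OF G c] r1 by simp
  ultimately have k_iso: "?k \<in> isotropy r s x" unfolding isotropy_def by simp
  have "Phi ?k = 0" using Phi_mul[OF c] Phi_iv eq by simp
  then have k: "?k = x" using iso_kernel[OF x k_iso] by simp
  have "mul g2 ?k = mul (mul g2 (iv g2)) g1"
    using assoc[OF G _ c] iv_props[OF G] by metis
  also have "\<dots> = mul (r g1) g1" using iv_props[OF G] r1 r2 by simp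
  also have "\<dots> = g1" using unit_mul[OF G] by simp
  finally have "mul g2 x = g1" using k by simp
  moreover have "mul g2 x = g2" using unit_mul[OF G] r2 by metis
  ultimately show ?thesis by simp
qed

lemma conj_iso:
  assumes g: "g \<in> isotropy r s (s h)"
  shows "mul (mul h g) (iv h) \<in> isotropy r s (r h)"
    and "Phi (mul (mul h g) (iv h)) = Phi g"
proof -
  have rg: "r g = s h" "s g = s h" using g unfolding isotropy_def by auto
  have c1: "s h = r g" using rg by simp
  have c2: "s (mul h g) = r (iv h)" using mul_rs[OF G c1] rg iv_props[OF G] by simp
  show "mul (mul h g) (iv h) \<in> isotropy r s (r h)"
    unfolding isotropy_def using mul_rs[OF G c2] mul_rs[OF G c1] iv_props[OF G] by simp
  show "Phi (mul (mul h g) (iv h)) = Phi g"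
    using Phi_mul[OF c2] Phi_mul[OF c1] Phi_iv by simp
qed

lemma conj_iso':
  assumes k: "k \<in> isotropy r s (r h)"
  shows "mul (mul (iv h) k) h \<in> isotropy r s (s h)"
    and "Phi (mul (mul (iv h) k) h) = Phi k"
proof -
  have k': "k \<in> isotropy r s (s (iv h))" using k iv_props[OF G] by simp
  have e: "iv (iv h) = h \<or> True" by simp
  have rk: "r k = r h" "s k = r h" using k unfolding isotropy_def by auto
  have c1: "s (iv h) = r k" using rk iv_props[OF G] by simp
  have c2: "s (mul (iv h) k) = r h" using mul_rs[OF G c1] rk by simp
  show "mul (mul (iv h) k) h \<in> isotropy r s (s h)"
    unfolding isotropy_def using mul_rs[OF G c2] mul_rs[OF G c1] iv_props[OF G] by simp
  show "Phi (mul (mul (iv h) k) h) = Phi k"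
    using Phi_mul[OF c2] Phi_mul[OF c1] Phi_iv by simp
qed

lemma Phi_iso_conj: "Phi ` isotropy r s (r h) = Phi ` isotropy r s (s h)"
proof
  show "Phi ` isotropy r s (r h) \<subseteq> Phi ` isotropy r s (s h)"
    using conj_iso' by (metis (no_types, lifting) image_subset_iff rev_image_eqI)
  show "Phi ` isotropy r s (s h) \<subseteq> Phi ` isotropy r s (r h)"
    using conj_iso by (metis (no_types, lifting) image_subset_iff rev_image_eqI)
qed

lemma inv_pred: "invariant_set r s {x\<in>G0. P (Phi ` isotropy r s x)}"
  unfolding invariant_set_def
proof (rule set_eqI, rule iffI)
  fix y assume y: "y \<in> {x\<in>G0. P (Phi ` isotropy r s x)}"
  then have "s y = y" "r y = y" using unit_rs[OF G] by auto
  then show "y \<in> r ` (s -` {x\<in>G0. P (Phi ` isotropy r s x)})" using y by (metis imageI vimageI)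
next
  fix y assume "y \<in> r ` (s -` {x\<in>G0. P (Phi ` isotropy r s x)})"
  then obtain h where "y = r h" "s h \<in> G0" "P (Phi ` isotropy r s (s h))" by blast
  then show "y \<in> {x\<in>G0. P (Phi ` isotropy r s x)}" using Phi_iso_conj rs_in[OF G] by simp
qed

lemma iso_subgroup: assumes x: "x \<in> G0" shows "subgroup_of (Phi ` isotropy r s x)"
  unfolding subgroup_of_def
proof (intro conjI ballI)
  have "x \<in> isotropy r s x" using unit_rs[OF G x] unfolding isotropy_def by simp
  then show "0 \<in> Phi ` isotropy r s x" using Phi_unit[OF x] by force
next
  fix a b assume "a \<in> Phi ` isotropy r s x" "b \<in> Phi ` isotropy r s x"
  then obtain g h where g: "g \<in> isotropy r s x" "a = Phi g" and h: "h \<in> isotropy r s x" "b = Phi h"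
    by blast
  have c: "s g = r h" using g h unfolding isotropy_def by simp
  have "mul g h \<in> isotropy r s x" using g h mul_rs[OF G c] unfolding isotropy_def by simp
  then show "a + b \<in> Phi ` isotropy r s x" using Phi_mul[OF c] g h by force
  have "iv g \<in> isotropy r s x" using g iv_props[OF G] unfolding isotropy_def by simp
  moreover have "Phi (iv g) = - a" using Phi_iv g by simp
  ultimately show "- a \<in> Phi ` isotropy r s x" by (metis image_eqI)
qed

definition "Eset a = {x\<in>G0. a \<in> Phi ` isotropy r s x}"

lemma E_eq: "Eset a = r ` {g. r g = s g \<and> Phi g = a}"
  unfolding Eset_def isotropy_def
proof (rule set_eqI, rule iffI)
  fix x assume "x \<in> {x \<in> G0. a \<in> Phi ` {g. r g = x \<and> s g = x}}"
  then obtain g where "r g = x" "s g = x" "Phi g = a" by blast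
  then show "x \<in> r ` {g. r g = s g \<and> Phi g = a}" by force
next
  fix x assume "x \<in> r ` {g. r g = s g \<and> Phi g = a}"
  then obtain g where "x = r g" "r g = s g" "Phi g = a" by blast
  then show "x \<in> {x \<in> G0. a \<in> Phi ` {g. r g = x \<and> s g = x}}" using rs_in[OF G] by force
qed

lemma E_borel: "Eset a \<in> sets borel"
proof -
  have "{g. r g = s g} \<in> sets borel"
    using closed_Collect_eq[OF r_cont[OF G] s_cont[OF G]] by auto
  moreover have "Phi -` {a} \<in> sets borel" using gr unfolding injectively_graded_def by auto
  ultimately have "{g. r g = s g} \<inter> Phi -` {a} \<in> sets borel" by auto
  moreover have "{g. r g = s g} \<inter> Phi -` {a} = {g. r g = s g \<and> Phi g = a}" by auto
  ultimately show ?thesis unfolding E_eq using r_image_borel[OF G] by metis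
qed

lemma X_eq: "X_set G0 r s Phi C = {x \<in> UNIV. \<forall>a. (a \<in> C \<longrightarrow> x \<in> Eset a) \<and> (a \<notin> C \<longrightarrow> x \<in> G0 - Eset a)} \<inter> G0"
  unfolding X_set_def Eset_def by auto

lemma X_borel: "X_set G0 r s Phi C \<in> sets borel"
proof -
  have "{x \<in> space borel. \<forall>a. (a \<in> C \<longrightarrow> x \<in> Eset a) \<and> (a \<notin> C \<longrightarrow> x \<in> G0 - Eset a)} \<in> sets borel"
    using E_borel G0_borel[OF G] by (intro sets.sets_Collect_countable_All) auto
  then show ?thesis unfolding X_eq using G0_borel[OF G] by simp
qed

lemma X_inv: "invariant_set r s (X_set G0 r s Phi C)"
  unfolding X_set_def by (rule inv_pred)

lemma E_inv: "invariant_set r s (Eset a)"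
  unfolding Eset_def by (rule inv_pred)

end

lemma euclidean_Hausdorff: "Hausdorff_space (euclidean :: 'g::t2_space topology)"
  unfolding Hausdorff_space_def disjnt_def
proof (intro allI impI)
  fix x y :: 'g assume "x \<in> topspace euclidean \<and> y \<in> topspace euclidean \<and> x \<noteq> y"
  then have "x \<noteq> y" by blast
  from hausdorff[OF this] obtain U V where UV: "open U" "open V" "x \<in> U" "y \<in> V" "U \<inter> V = {}"
    by auto
  have "openin euclidean U" "openin euclidean V" using UV(1,2) by (simp_all add: open_openin[symmetric])
  then show "\<exists>U V. openin euclidean U \<and> openin euclidean V \<and> x \<in> U \<and> y \<in> V \<and> U \<inter> V = {}"
    using UV(3,4,5) by (intro exI[of _ U] exI[of _ V]) simp
qed

lemma euclidean_second_countable: "second_countable (euclidean :: 'g::second_countable_topology topology)"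
proof -
  obtain B :: "'g set set" where B: "countable B" "topological_basis B"
    using ex_countable_basis by blast
  have o1: "\<forall>V\<in>B. openin euclidean V" using B(2) topological_basis_open by auto
  have o2: "\<forall>U x. openin euclidean U \<and> x \<in> U \<longrightarrow> (\<exists>V\<in>B. x \<in> V \<and> V \<subseteq> U)"
  proof (intro allI impI)
    fix U :: "'g set" and x :: 'g assume a: "openin euclidean U \<and> x \<in> U"
    then have "open U" "x \<in> U" by auto
    then obtain V where "V \<in> B" "x \<in> V" "V \<subseteq> U" using topological_basisE[OF B(2)] by blast
    then show "\<exists>V\<in>B. x \<in> V \<and> V \<subseteq> U" by blast
  qed
  have "countable B \<and> (\<forall>V\<in>B. openin euclidean V) \<and>
             (\<forall>U x. openin euclidean U \<and> x \<in> U \<longrightarrow> (\<exists>V \<in> B. x \<in> V \<and> V \<subseteq> U))"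
    by (rule conjI[OF B(1) conjI[OF o1 o2]])
  then show ?thesis unfolding second_countable_def by (rule exI)
qed

lemma euclidean_normal:
  assumes lc: "locally_compact_space (euclidean :: 'g::{t2_space, second_countable_topology} topology)"
  shows "normal_space (euclidean :: 'g topology)"
proof -
  have reg: "regular_space (euclidean :: 'g topology)"
    using locally_compact_Hausdorff_imp_regular_space[OF lc euclidean_Hausdorff] .
  have "Lindelof_space (euclidean :: 'g topology)"
    by (rule second_countable_imp_Lindelof_space[OF euclidean_second_countable])
  then show ?thesis by (rule regular_Lindelof_imp_normal_space[OF reg])
qed

lemma local_bump:
  fixes W :: "'g::{t2_space, second_countable_topology} set"
  assumes lc: "locally_compact_space (euclidean :: 'g topology)" and W: "open W" and g: "g \<in> W"
  shows "\<exists>U f. open U \<and> g \<in> U \<and> (\<forall>y\<in>U. f y = (1::real)) \<and> (\<forall>y. y \<notin> W \<longrightarrow> f y = 0)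
     \<and> continuous_on UNIV f \<and> compact (closure {y. f y \<noteq> 0}) \<and> (\<forall>y. 0 \<le> f y \<and> f y \<le> 1)"
proof -
  have H: "Hausdorff_space (euclidean :: 'g topology)" by (rule euclidean_Hausdorff)
  have reg: "regular_space (euclidean :: 'g topology)"
    using locally_compact_Hausdorff_imp_regular_space[OF lc H] .
  have "neighbourhood_base_of (compactin euclidean) (euclidean :: 'g topology)"
    using locally_compact_space_neighbourhood_base H lc by blast
  then have "\<exists>U V. openin euclidean U \<and> compactin euclidean V \<and> g \<in> U \<and> U \<subseteq> V \<and> V \<subseteq> W"
    unfolding neighbourhood_base_of using W g by simp
  then obtain U1 K where U1: "open U1" "compact K" "g \<in> U1" "U1 \<subseteq> K" "K \<subseteq> W"
    by auto
  have "neighbourhood_base_of (closedin euclidean) (euclidean :: 'g topology)"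
    using reg neighbourhood_base_of_closedin by blast
  then have "\<exists>U V. openin euclidean U \<and> closedin euclidean V \<and> g \<in> U \<and> U \<subseteq> V \<and> V \<subseteq> U1"
    unfolding neighbourhood_base_of using U1 by simp
  then obtain U2 C where U2: "open U2" "closed C" "g \<in> U2" "U2 \<subseteq> C" "C \<subseteq> U1"
    by auto
  obtain f where f: "continuous_map euclidean (top_of_set {0..1::real}) f"
      "f ` (- U1) \<subseteq> {0}" "f ` C \<subseteq> {1}"
  proof -
    have "closedin euclidean (- U1)" using U1(1) by (simp add: closed_Compl)
    moreover have "closedin euclidean C" using U2(2) by simp
    moreover have "disjnt (- U1) C" using U2(5) by (auto simp: disjnt_def)
    ultimately show ?thesis using Urysohn_lemma[OF euclidean_normal[OF lc], of "- U1" C 0 1] that by auto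
  qed
  have fc: "continuous_on UNIV f" and fr: "\<And>y. f y \<in> {0..1}"
    using f(1) by (auto simp: continuous_map_in_subtopology)
  have sub: "{y. f y \<noteq> 0} \<subseteq> K" using f(2) U1 by force
  have "closed K" using U1(2) by (rule compact_imp_closed)
  then have "closure {y. f y \<noteq> 0} \<subseteq> K" using sub closure_minimal by blast
  then have "compact (closure {y. f y \<noteq> 0})"
    using compact_Int_closed[OF U1(2), of "closure {y. f y \<noteq> 0}"] by (simp add: Int_absorb1)
  moreover have "\<forall>y\<in>U2. f y = 1" using f(3) U2 by force
  moreover have "\<forall>y. y \<notin> W \<longrightarrow> f y = 0" using f(2) U1 by force
  ultimately show ?thesis using U2 fc fr by (intro exI[of _ U2] exI[of _ f]) auto
qed

lemma Cc_approx:
  fixes W :: "'g::{t2_space, second_countable_topology} set"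
  assumes lc: "locally_compact_space (euclidean :: 'g topology)" and W: "open W"
  shows "\<exists>F :: nat \<Rightarrow> 'g \<Rightarrow> complex. (\<forall>k. Cc (F k)) \<and> (\<forall>k g. g \<notin> W \<longrightarrow> F k g = 0)
     \<and> (\<forall>g\<in>W. \<forall>\<^sub>F k in sequentially. F k g = 1)"
proof (cases "W = {}")
  case True
  then show ?thesis
  proof (intro exI[of _ "\<lambda>k g. 0"] conjI allI ballI impI)
    show "Cc (\<lambda>g. 0 :: complex)" for k :: nat unfolding Cc_def by simp
  qed auto
next
  case False
  define P where "P U f \<longleftrightarrow> open U \<and> (\<forall>y\<in>U. f y = (1::real)) \<and> (\<forall>y. y \<notin> W \<longrightarrow> f y = 0)
     \<and> continuous_on UNIV f \<and> compact (closure {y. f y \<noteq> 0}) \<and> (\<forall>y. 0 \<le> f y \<and> f y \<le> 1)" for U f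
  let ?F = "{U. \<exists>f. P U f}"
  have opF: "open U" if UF: "U \<in> ?F" for U
  proof -
    obtain f where "P U f" using UF by blast
    then show ?thesis unfolding P_def by simp
  qed
  obtain F' where F': "F' \<subseteq> ?F" "countable F'" "\<Union>F' = \<Union>?F"
    by (rule Lindelof[of ?F, OF opF])
  have cov: "\<Union>?F = W"
  proof
    show "\<Union>?F \<subseteq> W"
    proof
      fix y assume "y \<in> \<Union>?F"
      then obtain U f where "P U f" "y \<in> U" by blast
      then have "f y = 1" "y \<notin> W \<longrightarrow> f y = 0" unfolding P_def by auto
      then show "y \<in> W" by auto
    qed
    show "W \<subseteq> \<Union>?F"
    proof
      fix y assume "y \<in> W"
      from local_bump[OF lc W this] obtain U f where Uf: "open U \<and> y \<in> U \<and> (\<forall>y\<in>U. f y = (1::real)) \<and> (\<forall>y. y \<notin> W \<longrightarrow> f y = 0)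
     \<and> continuous_on UNIV f \<and> compact (closure {y. f y \<noteq> 0}) \<and> (\<forall>y. 0 \<le> f y \<and> f y \<le> 1)"
        by (elim exE) (erule that)
      then have "P U f" unfolding P_def by blast
      then have "U \<in> ?F" by blast
      then show "y \<in> \<Union>?F" using Uf by blast
    qed
  qed
  have F'ne: "F' \<noteq> {}"
  proof
    assume "F' = {}" then have "\<Union>?F = {}" using F'(3) by simp
    then show False using False cov by simp
  qed
  define U where "U n = from_nat_into F' n" for n
  have UF: "U n \<in> F'" for n using from_nat_into[OF F'ne] U_def by simp
  have Ucov: "\<exists>n. y \<in> U n" if "y \<in> W" for y
  proof -
    from that have "y \<in> \<Union>F'" using F'(3) cov by simp
    then obtain V where "V \<in> F'" "y \<in> V" by blast
    then obtain n where "from_nat_into F' n = V" using from_nat_into_surj[OF F'(2)] by blast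
    then show ?thesis using \<open>y \<in> V\<close> U_def by blast
  qed
  define f where "f n = (SOME f. P (U n) f)" for n
  have Pf: "P (U n) (f n)" for n
  proof -
    have "\<exists>f. P (U n) f" using UF[of n] F'(1) by blast
    then show ?thesis unfolding f_def by (rule someI_ex)
  qed
  define M where "M k y = Max ((\<lambda>n. f n y) ` {..k})" for k y
  have M_in: "\<exists>n. M k y = f n y" for k y
  proof -
    have "M k y \<in> (\<lambda>n. f n y) ` {..k}" unfolding M_def by (intro Max_in) auto
    then show ?thesis by blast
  qed
  have M_ge: "f n y \<le> M k y" if "n \<le> k" for n k y
    unfolding M_def using that by (intro Max_ge) auto
  have M_le: "M k y \<le> 1" for k y
  proof -
    obtain n where "M k y = f n y" using M_in by blast
    then show ?thesis using Pf[of n] unfolding P_def by simp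
  qed
  have M_zero: "M k y = 0" if "y \<notin> W" for k y
  proof -
    obtain n where "M k y = f n y" using M_in by blast
    then show ?thesis using Pf[of n] that unfolding P_def by simp
  qed
  have M_suc: "M (Suc k) y = max (M k y) (f (Suc k) y)" for k y
    unfolding M_def by (simp add: atMost_Suc Max_insert max.commute)
  have M_0: "M 0 = f 0" unfolding M_def by auto
  have M_props: "continuous_on UNIV (M k) \<and> compact (closure {y. M k y \<noteq> 0})
      \<and> (\<forall>y. 0 \<le> M k y)" for k
  proof (induction k)
    case 0
    then show ?case using Pf[of 0] unfolding P_def M_0 by simp
  next
    case (Suc k)
    have fe: "M (Suc k) = (\<lambda>y. max (M k y) (f (Suc k) y))" using M_suc by auto
    have c: "continuous_on UNIV (M (Suc k))"
      unfolding fe using Suc Pf[of "Suc k"] unfolding P_def by (intro continuous_on_max) auto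
    have "{y. M (Suc k) y \<noteq> 0} \<subseteq> {y. M k y \<noteq> 0} \<union> {y. f (Suc k) y \<noteq> 0}"
      unfolding fe by auto
    then have "closure {y. M (Suc k) y \<noteq> 0} \<subseteq> closure {y. M k y \<noteq> 0} \<union> closure {y. f (Suc k) y \<noteq> 0}"
      using closure_mono closure_Un by metis
    moreover have "compact (closure {y. M k y \<noteq> 0} \<union> closure {y. f (Suc k) y \<noteq> 0})"
      using Suc Pf[of "Suc k"] unfolding P_def by auto
    ultimately have "compact (closure {y. M (Suc k) y \<noteq> 0})"
      using compact_Int_closed[of "closure {y. M k y \<noteq> 0} \<union> closure {y. f (Suc k) y \<noteq> 0}" "closure {y. M (Suc k) y \<noteq> 0}"]
      by (simp add: Int_absorb1)
    moreover have "\<forall>y. 0 \<le> M (Suc k) y" unfolding fe using Suc by (simp add: le_max_iff_disj)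
    ultimately show ?case using c by blast
  qed
  define Fc where "Fc k y = complex_of_real (M k y)" for k y
  have "Cc (Fc k)" for k
  proof -
    have "continuous_on UNIV (Fc k)" unfolding Fc_def[abs_def]
      using M_props[of k] by (intro continuous_intros) auto
    moreover have "{y. Fc k y \<noteq> 0} = {y. M k y \<noteq> 0}" unfolding Fc_def by simp
    ultimately show ?thesis unfolding Cc_def using M_props[of k] by simp
  qed
  moreover have "\<forall>k g. g \<notin> W \<longrightarrow> Fc k g = 0" unfolding Fc_def using M_zero by simp
  moreover have "\<forall>\<^sub>F k in sequentially. Fc k g = 1" if gW: "g \<in> W" for g
  proof -
    obtain n where n: "g \<in> U n" using Ucov gW by blast
    have "f n g = 1" using Pf[of n] n unfolding P_def by simp
    then have "M k g = 1" if "n \<le> k" for k using M_ge[OF that, of g] M_le[of k g] by simp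
    then show ?thesis unfolding Fc_def eventually_sequentially by auto
  qed
  ultimately show ?thesis by (intro exI[of _ Fc]) simp
qed

lemma ae_ex:
  assumes "AE x in M. P x" and "emeasure M (space M) \<noteq> 0"
  shows "\<exists>x\<in>space M. P x"
proof (rule ccontr)
  assume "\<not> (\<exists>x\<in>space M. P x)"
  then have "{x \<in> space M. \<not> P x} = space M" by auto
  moreover obtain N where "{x \<in> space M. \<not> P x} \<subseteq> N" "emeasure M N = 0" "N \<in> sets M"
    using assms(1) by (rule AE_E)
  ultimately have "space M \<subseteq> N" by simp
  then have "emeasure M (space M) \<le> emeasure M N" using \<open>N \<in> sets M\<close> by (rule emeasure_mono)
  then show False using assms(2) \<open>emeasure M N = 0\<close> by simp
qed

lemma ae_const:
  fixes F :: "'x \<Rightarrow> complex"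
  assumes zo: "\<And>S. S \<in> sets borel \<Longrightarrow> (AE x in M. F x \<in> S) \<or> (AE x in M. F x \<notin> S)"
    and nz: "emeasure M (space M) \<noteq> 0"
  shows "\<exists>c. AE x in M. F x = c"
proof -
  obtain Bs :: "complex set set" where Bs: "countable Bs" "topological_basis Bs"
    using ex_countable_basis by blast
  have Bs_open: "open V" if "V \<in> Bs" for V using Bs(2) that topological_basis_open by auto
  define Cs where "Cs = {V\<in>Bs. \<not> (AE x in M. F x \<in> V)}"
  have Cs_ae: "AE x in M. F x \<notin> V" if "V \<in> Cs" for V
  proof -
    have "V \<in> sets borel" using that Bs_open Cs_def by auto
    then show ?thesis using zo[of V] that Cs_def by auto
  qed
  have "countable Cs" using Bs(1) Cs_def by simp
  then have ae1: "AE x in M. \<forall>V\<in>Cs. F x \<notin> V"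
    using Cs_ae by (simp add: AE_ball_countable)
  obtain x0 where "x0 \<in> space M" "\<forall>V\<in>Cs. F x0 \<notin> V" using ae_ex[OF ae1 nz] by blast
  define c where "c = F x0"
  have cZ: "\<forall>V\<in>Cs. c \<notin> V" using \<open>\<forall>V\<in>Cs. F x0 \<notin> V\<close> c_def by simp
  have uniq: "z = c" if zZ: "\<forall>V\<in>Cs. z \<notin> V" for z
  proof (rule ccontr)
    assume "z \<noteq> c"
    from hausdorff[OF this] obtain U V where UV: "open U" "open V" "z \<in> U" "c \<in> V" "U \<inter> V = {}"
      by auto
    obtain U' where U': "U' \<in> Bs" "z \<in> U'" "U' \<subseteq> U" using topological_basisE[OF Bs(2) UV(1,3)] by blast
    obtain V' where V': "V' \<in> Bs" "c \<in> V'" "V' \<subseteq> V" using topological_basisE[OF Bs(2) UV(2,4)] by blast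
    have "U' \<notin> Cs" using zZ U' by blast
    then have a1: "AE x in M. F x \<in> U'" using U'(1) Cs_def by auto
    have "V' \<notin> Cs" using cZ V' by blast
    then have a2: "AE x in M. F x \<in> V'" using V'(1) Cs_def by auto
    have "AE x in M. False"
      using a1 a2 by eventually_elim (use UV(5) U'(3) V'(3) in blast)
    then obtain x where "x \<in> space M" "False" using ae_ex nz by blast
    then show False by simp
  qed
  have "AE x in M. F x = c"
    using ae1 by eventually_elim (use uniq in blast)
  then show ?thesis by blast
qed

context
  fixes G0 :: "'g::{t2_space, second_countable_topology} set"
    and r s :: "'g \<Rightarrow> 'g" and mul :: "'g \<Rightarrow> 'g \<Rightarrow> 'g" and iv :: "'g \<Rightarrow> 'g"
    and Phi :: "'g \<Rightarrow> 'a::{ab_group_add, countable}"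
  assumes G: "etale_groupoid G0 r s mul iv"
    and gr: "injectively_graded G0 r s mul Phi"
begin

lemma sat_inv: "invariant_set r s (r ` (s -` Y))"
  unfolding invariant_set_def
proof (rule set_eqI, rule iffI)
  fix y assume y: "y \<in> r ` (s -` Y)"
  have "y \<in> G0" using y rs_in[OF G] by blast
  then have "s y = y" "r y = y" using unit_rs[OF G] by auto
  then show "y \<in> r ` (s -` (r ` (s -` Y)))" using y by (metis imageI vimageI)
next
  fix y assume "y \<in> r ` (s -` (r ` (s -` Y)))"
  then obtain k where k: "y = r k" "s k \<in> r ` (s -` Y)" by blast
  then obtain h where h: "s k = r h" "s h \<in> Y" by blast
  have "r (mul k h) = r k" "s (mul k h) = s h" using mul_rs[OF G h(1)] by auto
  then show "y \<in> r ` (s -` Y)" using k h by (metis imageI vimageI)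
qed

lemma iso_mul_iv:
  assumes g: "g \<in> isotropy r s x" and h: "h \<in> isotropy r s x"
  shows "mul (iv h) g \<in> isotropy r s x" "Phi (mul (iv h) g) = - Phi h + Phi g"
proof -
  have c: "s (iv h) = r g" using g h iv_props[OF G] unfolding isotropy_def by simp
  show "mul (iv h) g \<in> isotropy r s x"
    using mul_rs[OF G c] g h iv_props[OF G] unfolding isotropy_def by simp
  show "Phi (mul (iv h) g) = - Phi h + Phi g"
    using Phi_mul[OF G gr c] Phi_iv[OF G gr] by simp
qed

end

theorem theorem7p3:
  fixes G0 :: "'g::{t2_space, second_countable_topology} set"
    and r s :: "'g \<Rightarrow> 'g" and mul :: "'g \<Rightarrow> 'g \<Rightarrow> 'g" and iv :: "'g \<Rightarrow> 'g"
    and Phi :: "'g \<Rightarrow> 'a::{ab_group_add, countable}"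
    and c :: "'g \<Rightarrow> real" and \<beta> :: real and \<mu> :: "'g measure"
  assumes G: "etale_groupoid G0 r s mul iv"
    and grading: "injectively_graded G0 r s mul Phi"
    and c_cont: "continuous_on UNIV c" and c_hom: "groupoid_hom r s mul c"
    and mu_Delta: "Delta G0 r s c \<beta> \<mu>"
    and mu_nonzero: "emeasure \<mu> G0 \<noteq> 0"
    and mu_erg: "ergodic G0 r s \<mu>"
  shows
    "(\<forall>C. subgroup_of C \<longrightarrow>
          X_set G0 r s Phi C \<in> sets borel \<and> invariant_set r s (X_set G0 r s Phi C))
     \<and> (\<exists>!B. subgroup_of B \<and> emeasure \<mu> (G0 - X_set G0 r s Phi B) = 0)
     \<and> (\<forall>B. subgroup_of B \<and> emeasure \<mu> (G0 - X_set G0 r s Phi B) = 0 \<longrightarrow>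
          (\<forall>\<phi>. measurable_state_field G0 r s mul iv \<mu> \<phi> \<and>
               (AE x in \<mu>. \<forall>g\<in>isotropy r s x. \<forall>h. s h = x \<longrightarrow>
                  \<phi> x g = \<phi> (r h) (mul (mul h g) (iv h)))
             \<longrightarrow> (\<exists>\<psi>. group_state B (\<lambda>a b. a + b) uminus 0 \<psi> \<and>
                   (AE x in \<mu>. x \<in> X_set G0 r s Phi B \<longrightarrow>
                      (\<forall>g\<in>isotropy r s x. \<psi> (Phi g) = \<phi> x g)))))"
proof -
  let ?X = "X_set G0 r s Phi"
  let ?iso = "isotropy r s"
  have reg: "regular_borel_on G0 \<mu>" using mu_Delta unfolding Delta_def by simp
  have sp: "space \<mu> = G0" using reg unfolding regular_borel_on_def by simp
  have G0b: "G0 \<in> sets borel" by (rule G0_borel[OF G])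
  have inS: "A \<in> sets \<mu> \<longleftrightarrow> A \<subseteq> G0 \<and> A \<in> sets borel" for A
  proof -
    have "sets \<mu> = sets (restrict_space borel G0)" using reg unfolding regular_borel_on_def by simp
    moreover have "G0 \<inter> space borel \<in> sets borel" using G0b by simp
    ultimately show ?thesis by (simp add: sets_restrict_space_iff)
  qed
  have erg: "\<And>Y. Y \<in> sets \<mu> \<Longrightarrow> invariant_set r s Y \<Longrightarrow> emeasure \<mu> Y = 0 \<or> emeasure \<mu> (G0 - Y) = 0"
    using mu_erg unfolding ergodic_def by blast
  have XG: "?X C \<subseteq> G0" for C unfolding X_set_def by auto
  have XS: "G0 - ?X C \<in> sets \<mu>" for C using inS X_borel[OF G grading] G0b by auto
  have P1: "\<forall>C. subgroup_of C \<longrightarrow> ?X C \<in> sets borel \<and> invariant_set r s (?X C)"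
    using X_borel[OF G grading] X_inv[OF G grading] by blast
  have sub_of: "subgroup_of B" if "emeasure \<mu> (G0 - ?X B) = 0" for B
  proof -
    have "?X B \<noteq> {}"
    proof
      assume "?X B = {}"
      then show False using that mu_nonzero by simp
    qed
    then obtain x where "x \<in> ?X B" by blast
    then have "x \<in> G0" "Phi ` ?iso x = B" unfolding X_set_def by auto
    then show ?thesis using iso_subgroup[OF G grading] by metis
  qed
  define Bst where "Bst = {a. emeasure \<mu> (G0 - Eset G0 r s Phi a) = 0}"
  have Es: "Eset G0 r s Phi a \<in> sets \<mu>" for a
    using inS E_borel[OF G grading] Eset_def[OF G grading] by auto
  define N where "N a = (if a \<in> Bst then G0 - Eset G0 r s Phi a else Eset G0 r s Phi a)" for a
  have Nnull: "N a \<in> null_sets \<mu>" for a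
  proof (cases "a \<in> Bst")
    case True
    then have "emeasure \<mu> (G0 - Eset G0 r s Phi a) = 0" unfolding Bst_def by simp
    moreover have "G0 - Eset G0 r s Phi a \<in> sets \<mu>" using Es[of a] sp by (metis sets.compl_sets)
    ultimately show ?thesis unfolding N_def using True by (simp add: null_setsI)
  next
    case False
    then have "emeasure \<mu> (G0 - Eset G0 r s Phi a) \<noteq> 0" unfolding Bst_def by simp
    then have "emeasure \<mu> (Eset G0 r s Phi a) = 0" using erg[OF Es E_inv[OF G grading]] by blast
    then show ?thesis unfolding N_def using False Es by (simp add: null_setsI)
  qed
  have "(\<Union>a. N a) \<in> null_sets \<mu>" using Nnull by (rule null_sets_UN)
  moreover have "G0 - ?X Bst \<subseteq> (\<Union>a. N a)"
  proof
    fix x assume x: "x \<in> G0 - ?X Bst"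
    then have "Phi ` ?iso x \<noteq> Bst" "x \<in> G0" unfolding X_set_def by auto
    then obtain a where "(a \<in> Bst \<and> a \<notin> Phi ` ?iso x) \<or> (a \<notin> Bst \<and> a \<in> Phi ` ?iso x)" by blast
    then have "x \<in> N a" unfolding N_def Eset_def[OF G grading] using \<open>x \<in> G0\<close> by auto
    then show "x \<in> (\<Union>a. N a)" by blast
  qed
  ultimately have "G0 - ?X Bst \<in> null_sets \<mu>" by (rule null_sets_subset[OF _ XS])
  then have Bst_ok: "emeasure \<mu> (G0 - ?X Bst) = 0" by (rule null_setsD1)
  have P2: "\<exists>!B. subgroup_of B \<and> emeasure \<mu> (G0 - ?X B) = 0"
  proof (rule ex1I[of _ Bst])
    show "subgroup_of Bst \<and> emeasure \<mu> (G0 - ?X Bst) = 0" using Bst_ok sub_of by blast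
    fix B assume B: "subgroup_of B \<and> emeasure \<mu> (G0 - ?X B) = 0"
    show "B = Bst"
    proof (rule ccontr)
      assume ne: "B \<noteq> Bst"
      have "G0 \<subseteq> (G0 - ?X B) \<union> (G0 - ?X Bst)"
        using ne unfolding X_set_def by auto
      moreover have "(G0 - ?X B) \<union> (G0 - ?X Bst) \<in> null_sets \<mu>"
      proof (rule null_sets.Un)
        show "G0 - ?X B \<in> null_sets \<mu>" using B XS by (simp add: null_setsI)
        show "G0 - ?X Bst \<in> null_sets \<mu>" using Bst_ok XS by (simp add: null_setsI)
      qed
      moreover have "G0 \<in> sets \<mu>" using sets.top[of \<mu>] sp by simp
      ultimately have "G0 \<in> null_sets \<mu>" using null_sets_subset by blast
      then show False using mu_nonzero null_setsD1 by blast
    qed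
  qed
  have P3: "\<forall>\<phi>. measurable_state_field G0 r s mul iv \<mu> \<phi> \<and>
               (AE x in \<mu>. \<forall>g\<in>?iso x. \<forall>h. s h = x \<longrightarrow>
                  \<phi> x g = \<phi> (r h) (mul (mul h g) (iv h)))
             \<longrightarrow> (\<exists>\<psi>. group_state B (\<lambda>a b. a + b) uminus 0 \<psi> \<and>
                   (AE x in \<mu>. x \<in> ?X B \<longrightarrow>
                      (\<forall>g\<in>?iso x. \<psi> (Phi g) = \<phi> x g)))"
    if hB0: "subgroup_of B \<and> emeasure \<mu> (G0 - ?X B) = 0" for B
  proof -
    have hB: "emeasure \<mu> (G0 - ?X B) = 0" using hB0 by blast
    show ?thesis
  proof (intro allI impI)
    fix \<phi> assume h\<phi>: "measurable_state_field G0 r s mul iv \<mu> \<phi> \<and>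
               (AE x in \<mu>. \<forall>g\<in>?iso x. \<forall>h. s h = x \<longrightarrow>
                  \<phi> x g = \<phi> (r h) (mul (mul h g) (iv h)))"
    have msf_state: "\<forall>x\<in>G0. group_state (?iso x) mul iv x (\<phi> x)"
      using h\<phi> unfolding measurable_state_field_def by blast
    have msf_meas: "(\<lambda>x. infsum (\<lambda>g. f g * \<phi> x g) (?iso x)) \<in> borel_measurable (completion \<mu>)"
      if "Cc f" for f
      using h\<phi> that unfolding measurable_state_field_def by blast
    have ae_inv: "AE x in \<mu>. \<forall>g\<in>?iso x. \<forall>h. s h = x \<longrightarrow> \<phi> x g = \<phi> (r h) (mul (mul h g) (iv h))"
      using h\<phi> by blast
    obtain N0 where N0c: "{x \<in> space \<mu>. \<not> (\<forall>g\<in>?iso x. \<forall>h. s h = x \<longrightarrow> \<phi> x g = \<phi> (r h) (mul (mul h g) (iv h)))} \<subseteq> N0"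
      and N0e: "emeasure \<mu> N0 = 0" and N0s: "N0 \<in> sets \<mu>"
      using ae_inv by (rule AE_E)
    have N0b: "N0 \<in> null_sets \<mu>" using N0e N0s by (simp add: null_setsI)
    have N0a: "\<forall>g\<in>?iso x. \<forall>h. s h = x \<longrightarrow> \<phi> x g = \<phi> (r h) (mul (mul h g) (iv h))"
      if "x \<in> space \<mu> - N0" for x
      using N0c that by blast
    define F where "F b x = (if \<exists>g\<in>?iso x. Phi g = b then \<phi> x (THE g. g \<in> ?iso x \<and> Phi g = b) else 0)"
      for b x
    have Fval: "F (Phi g) x = \<phi> x g" if x: "x \<in> G0" and g: "g \<in> ?iso x" for g x
    proof -
      have "(THE g'. g' \<in> ?iso x \<and> Phi g' = Phi g) = g"
      proof (rule the_equality)
        show "g \<in> ?iso x \<and> Phi g = Phi g" using g by simp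
        fix g' assume "g' \<in> ?iso x \<and> Phi g' = Phi g"
        then show "g' = g" using iso_inj[OF G grading x _ g] by blast
      qed
      then show ?thesis unfolding F_def using g by auto
    qed
    have Fnone: "F b x = 0" if "\<not> (\<exists>g\<in>?iso x. Phi g = b)" for b x
      unfolding F_def using that by simp
    have lc: "locally_compact_space (euclidean :: 'g topology)"
      using G unfolding etale_groupoid_def by (elim conjE)
    have Fmeas: "F b \<in> borel_measurable (completion \<mu>)" for b
    proof -
      have Wo: "open (Phi -` {b})" using grading unfolding injectively_graded_def by (elim conjE) simp
      from Cc_approx[OF lc Wo] obtain Fk where Fk: "(\<forall>k. Cc (Fk k)) \<and> (\<forall>k g. g \<notin> Phi -` {b} \<longrightarrow> Fk k g = 0)
          \<and> (\<forall>g\<in>Phi -` {b}. \<forall>\<^sub>F k in sequentially. Fk k g = 1)"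
        by (elim exE) (erule that)
      have Fk1: "Cc (Fk k)" for k using Fk by blast
      have Fk2: "Fk k g = 0" if "Phi g \<noteq> b" for k g using Fk that by blast
      have Fk3: "\<forall>\<^sub>F k in sequentially. Fk k g = 1" if "Phi g = b" for g using Fk that by blast
      show ?thesis
      proof (rule borel_measurable_LIMSEQ_metric[of "\<lambda>k x. infsum (\<lambda>g. Fk k g * \<phi> x g) (?iso x)"])
        show "(\<lambda>x. infsum (\<lambda>g. Fk k g * \<phi> x g) (?iso x)) \<in> borel_measurable (completion \<mu>)" for k
          using msf_meas[OF Fk1[of k]] .
        fix x assume "x \<in> space (completion \<mu>)"
        then have x: "x \<in> G0" using sp by simp
        show "(\<lambda>k. infsum (\<lambda>g. Fk k g * \<phi> x g) (?iso x)) \<longlonglongrightarrow> F b x"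
        proof (cases "\<exists>g\<in>?iso x. Phi g = b")
          case True
          then obtain g0 where g0: "g0 \<in> ?iso x" "Phi g0 = b" by blast
          have sum_eq: "infsum (\<lambda>g. Fk k g * \<phi> x g) (?iso x) = Fk k g0 * \<phi> x g0" for k
          proof -
            have "infsum (\<lambda>g. Fk k g * \<phi> x g) (?iso x) = infsum (\<lambda>g. Fk k g * \<phi> x g) {g0}"
            proof (rule infsum_cong_neutral)
              fix g assume "g \<in> {g0} - ?iso x"
              then show "Fk k g * \<phi> x g = 0" using g0 by simp
            next
              fix g assume "g \<in> ?iso x - {g0}"
              then have "g \<in> ?iso x" "g \<noteq> g0" by auto
              then have "Phi g \<noteq> b" using iso_inj[OF G grading x _ g0(1)] g0(2) by metis
              then show "Fk k g * \<phi> x g = 0" using Fk2 by simp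
            qed simp
            then show ?thesis by simp
          qed
          have "\<forall>\<^sub>F k in sequentially. Fk k g0 = 1" using Fk3 g0(2) by simp
          then have "\<forall>\<^sub>F k in sequentially. infsum (\<lambda>g. Fk k g * \<phi> x g) (?iso x) = F b x"
          proof eventually_elim
            case (elim k)
            then show ?case using sum_eq[of k] Fval[OF x g0(1)] g0(2) by simp
          qed
          then show ?thesis by (rule tendsto_eventually)
        next
          case False
          have "infsum (\<lambda>g. Fk k g * \<phi> x g) (?iso x) = 0" for k
          proof (rule infsum_0)
            fix g assume "g \<in> ?iso x"
            then have "Phi g \<noteq> b" using False by blast
            then show "Fk k g * \<phi> x g = 0" using Fk2 by simp
          qed
          then show ?thesis using Fnone[OF False] by simp
        qed
      qed
    qed
    let ?\<Omega> = "G0 - N0"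
    have Finv: "F b (r h) = F b (s h)" if sh: "s h \<in> ?\<Omega>" for h b
    proof (cases "\<exists>g\<in>?iso (s h). Phi g = b")
      case True
      then obtain g where g: "g \<in> ?iso (s h)" "Phi g = b" by blast
      let ?k = "mul (mul h g) (iv h)"
      have k: "?k \<in> ?iso (r h)" "Phi ?k = Phi g" using conj_iso[OF G grading g(1)] by auto
      have "s h \<in> space \<mu> - N0" using sh sp by simp
      then have "\<phi> (s h) g = \<phi> (r h) ?k" using N0a g(1) by blast
      then show ?thesis
        using Fval[OF rs_in(2)[OF G] g(1)] Fval[OF rs_in(1)[OF G] k(1)] g(2) k(2) by simp
    next
      case False
      then have "b \<notin> Phi ` ?iso (s h)" by blast
      then have "b \<notin> Phi ` ?iso (r h)" using Phi_iso_conj[OF G grading, of h] by simp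
      then have "\<not> (\<exists>g\<in>?iso (r h). Phi g = b)" by blast
      then show ?thesis using Fnone False by simp
    qed
    have zo: "(AE x in \<mu>. F b x \<in> S) \<or> (AE x in \<mu>. F b x \<notin> S)" if S: "S \<in> sets borel" for b S
    proof -
      define L where "L = F b -` S \<inter> space (completion \<mu>)"
      have Ls: "L \<in> sets (completion \<mu>)" unfolding L_def using Fmeas[of b] S by (rule measurable_sets)
      have LG: "L = {x\<in>G0. F b x \<in> S}" unfolding L_def using sp by auto
      define L' where "L' = main_part \<mu> L"
      have L's: "L' \<in> sets \<mu>" unfolding L'_def using Ls by simp
      obtain Nn where Nn: "Nn \<in> null_sets \<mu>" "null_part \<mu> L \<subseteq> Nn" using null_part[OF Ls] by blast
      have LU: "L = L' \<union> null_part \<mu> L" unfolding L'_def using Ls by simp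
      define L2 where "L2 = L' \<inter> ?\<Omega>"
      have Os: "?\<Omega> \<in> sets \<mu>" using N0s sets.top[of \<mu>] sp by (metis sets.Diff)
      have L2s: "L2 \<in> sets \<mu>" unfolding L2_def using L's Os by (rule sets.Int)
      have L2b: "L2 \<in> sets borel" using inS L2s by blast
      define Sat where "Sat = r ` (s -` L2)"
      have "s \<in> borel_measurable borel" using s_cont[OF G] by (rule borel_measurable_continuous_onI)
      then have "s -` L2 \<inter> space borel \<in> sets borel" using L2b by (rule measurable_sets)
      then have sb: "s -` L2 \<in> sets borel" by simp
      have Sat_b: "Sat \<in> sets borel" unfolding Sat_def using r_image_borel[OF G sb] .
      have Sat_G: "Sat \<subseteq> G0" unfolding Sat_def using rs_in[OF G] by blast
      have Sat_s: "Sat \<in> sets \<mu>" using inS Sat_b Sat_G by simp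
      have Sat_inv: "invariant_set r s Sat" unfolding Sat_def by (rule sat_inv[OF G grading])
      have L2Sat: "L2 \<subseteq> Sat"
      proof
        fix x assume xL: "x \<in> L2"
        then have "x \<in> G0" unfolding L2_def by blast
        then have "s x = x" "r x = x" using unit_rs[OF G] by auto
        then show "x \<in> Sat" unfolding Sat_def using xL by (metis imageI vimageI)
      qed
      have L'L: "L' \<subseteq> L" using LU by blast
      have key: "y \<in> L" if yS: "y \<in> Sat" and yO: "y \<in> ?\<Omega>" for y
      proof -
        obtain h where h: "y = r h" "s h \<in> L2" using yS unfolding Sat_def by blast
        have "s h \<in> ?\<Omega>" "s h \<in> L" using h(2) L'L unfolding L2_def by auto
        then have "F b (s h) \<in> S" using LG by blast
        moreover have "F b (r h) = F b (s h)" using Finv \<open>s h \<in> ?\<Omega>\<close> by blast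
        ultimately show ?thesis using LG h(1) yO by simp
      qed
      from erg[OF Sat_s Sat_inv] show ?thesis
      proof
        assume "emeasure \<mu> Sat = 0"
        then have Satn: "Sat \<in> null_sets \<mu>" using Sat_s by (simp add: null_setsI)
        have "Sat \<union> N0 \<union> Nn \<in> null_sets \<mu>" using Satn N0b Nn(1) by (intro null_sets.Un)
        moreover have "{x \<in> space \<mu>. \<not> (F b x \<notin> S)} \<subseteq> Sat \<union> N0 \<union> Nn"
        proof
          fix x assume "x \<in> {x \<in> space \<mu>. \<not> (F b x \<notin> S)}"
          then have "x \<in> L" using LG sp by simp
          then have "x \<in> L' \<or> x \<in> Nn" using LU Nn(2) by blast
          moreover have "x \<in> Sat" if "x \<in> L'" "x \<notin> N0"
            using that L2Sat \<open>x \<in> L\<close> LG unfolding L2_def by blast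
          ultimately show "x \<in> Sat \<union> N0 \<union> Nn" by blast
        qed
        ultimately have "AE x in \<mu>. F b x \<notin> S" by (rule AE_I')
        then show ?thesis by blast
      next
        assume a: "emeasure \<mu> (G0 - Sat) = 0"
        have "G0 - Sat \<in> sets \<mu>" using Sat_s sets.top[of \<mu>] sp by (metis sets.Diff)
        then have "G0 - Sat \<in> null_sets \<mu>" using a by (simp add: null_setsI)
        then have "(G0 - Sat) \<union> N0 \<in> null_sets \<mu>" using N0b by (intro null_sets.Un)
        moreover have "{x \<in> space \<mu>. \<not> (F b x \<in> S)} \<subseteq> (G0 - Sat) \<union> N0"
        proof
          fix x assume x: "x \<in> {x \<in> space \<mu>. \<not> (F b x \<in> S)}"
          then have xG: "x \<in> G0" "F b x \<notin> S" using sp by auto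
          show "x \<in> (G0 - Sat) \<union> N0"
          proof (rule ccontr)
            assume "x \<notin> (G0 - Sat) \<union> N0"
            then have "x \<in> Sat" "x \<in> ?\<Omega>" using xG by auto
            then have "x \<in> L" by (rule key)
            then show False using LG xG by simp
          qed
        qed
        ultimately have "AE x in \<mu>. F b x \<in> S" by (rule AE_I')
        then show ?thesis by blast
      qed
    qed
    have nz: "emeasure \<mu> (space \<mu>) \<noteq> 0" using mu_nonzero sp by simp
    have const: "\<exists>cc. AE x in \<mu>. F b x = cc" for b
      by (rule ae_const[where F="F b", OF zo nz])
    define \<psi> where "\<psi> b = (SOME cc. AE x in \<mu>. F b x = cc)" for b
    have \<psi>ae: "AE x in \<mu>. F b x = \<psi> b" for b unfolding \<psi>_def using const[of b] by (rule someI_ex)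
    have aeall: "AE x in \<mu>. \<forall>b. F b x = \<psi> b" using \<psi>ae by (simp add: AE_all_countable)
    have aeX: "AE x in \<mu>. x \<in> ?X B"
    proof (rule AE_I')
      show "G0 - ?X B \<in> null_sets \<mu>" using hB XS by (simp add: null_setsI)
      show "{x \<in> space \<mu>. x \<notin> ?X B} \<subseteq> G0 - ?X B" using sp by auto
    qed
    have "AE x in \<mu>. x \<in> ?X B \<and> (\<forall>b. F b x = \<psi> b)" using aeX aeall by eventually_elim simp
    then obtain x0 where x0: "x0 \<in> space \<mu>" "x0 \<in> ?X B \<and> (\<forall>b. F b x0 = \<psi> b)"
      using ae_ex[OF _ nz] by blast
    have x0G: "x0 \<in> G0" using x0(1) sp by simp
    have Bx0: "Phi ` ?iso x0 = B" using x0(2) unfolding X_set_def by blast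
    have gs0: "group_state (?iso x0) mul iv x0 (\<phi> x0)" using msf_state x0G by blast
    have \<psi>\<phi>: "\<psi> (Phi g) = \<phi> x0 g" if "g \<in> ?iso x0" for g
      using Fval[OF x0G that] x0(2) by metis
    have gsB: "group_state B (\<lambda>a b. a + b) uminus 0 \<psi>"
      unfolding group_state_def
    proof (intro conjI allI impI)
      have "x0 \<in> ?iso x0" using unit_rs[OF G x0G] unfolding isotropy_def by simp
      then have "\<psi> (Phi x0) = \<phi> x0 x0" using \<psi>\<phi> by blast
      moreover have "Phi x0 = 0" using Phi_unit[OF G grading x0G] .
      moreover have "\<phi> x0 x0 = 1" using gs0 unfolding group_state_def by blast
      ultimately show "\<psi> 0 = 1" by simp
    next
      fix n :: nat and hs :: "nat \<Rightarrow> 'a" and cs :: "nat \<Rightarrow> complex"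
      assume hsB: "\<forall>i<n. hs i \<in> B"
      define gs where "gs i = (SOME g. g \<in> ?iso x0 \<and> Phi g = hs i)" for i
      have gs: "gs i \<in> ?iso x0 \<and> Phi (gs i) = hs i" if "i < n" for i
      proof -
        have "hs i \<in> Phi ` ?iso x0" using hsB that Bx0 by simp
        then obtain g where "g \<in> ?iso x0" "hs i = Phi g" by (rule imageE)
        then have "\<exists>g. g \<in> ?iso x0 \<and> Phi g = hs i" by (intro exI[of _ g]) simp
        then show ?thesis unfolding gs_def by (rule someI_ex)
      qed
      have "\<forall>i<n. gs i \<in> ?iso x0" using gs by blast
      then have pos: "let S = (\<Sum>i<n. \<Sum>j<n. cs i * cnj (cs j) * \<phi> x0 (mul (iv (gs j)) (gs i))) in S \<in> \<real> \<and> 0 \<le> Re S"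
        using gs0 unfolding group_state_def by blast
      have eq: "(\<Sum>i<n. \<Sum>j<n. cs i * cnj (cs j) * \<phi> x0 (mul (iv (gs j)) (gs i)))
          = (\<Sum>i<n. \<Sum>j<n. cs i * cnj (cs j) * \<psi> (- hs j + hs i))"
      proof (rule sum.cong[OF refl], rule sum.cong[OF refl])
        fix i j assume ij: "i \<in> {..<n}" "j \<in> {..<n}"
        then have gi: "gs i \<in> ?iso x0" "Phi (gs i) = hs i" and gj: "gs j \<in> ?iso x0" "Phi (gs j) = hs j"
          using gs by auto
        have "\<phi> x0 (mul (iv (gs j)) (gs i)) = \<psi> (Phi (mul (iv (gs j)) (gs i)))"
          using \<psi>\<phi> iso_mul_iv(1)[OF G grading gi(1) gj(1)] by simp
        also have "\<dots> = \<psi> (- hs j + hs i)" using iso_mul_iv(2)[OF G grading gi(1) gj(1)] gi gj by simp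
        finally show "cs i * cnj (cs j) * \<phi> x0 (mul (iv (gs j)) (gs i)) = cs i * cnj (cs j) * \<psi> (- hs j + hs i)"
          by simp
      qed
      show "let S = (\<Sum>i<n. \<Sum>j<n. cs i * cnj (cs j) * \<psi> (- hs j + hs i)) in S \<in> \<real> \<and> 0 \<le> Re S"
        using pos unfolding eq .
    qed
    show "\<exists>\<psi>. group_state B (\<lambda>a b. a + b) uminus 0 \<psi> \<and>
                   (AE x in \<mu>. x \<in> ?X B \<longrightarrow> (\<forall>g\<in>?iso x. \<psi> (Phi g) = \<phi> x g))"
    proof (intro exI[of _ \<psi>] conjI)
      show "group_state B (\<lambda>a b. a + b) uminus 0 \<psi>" by (rule gsB)
      show "AE x in \<mu>. x \<in> ?X B \<longrightarrow> (\<forall>g\<in>?iso x. \<psi> (Phi g) = \<phi> x g)"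
        using aeall AE_space
      proof eventually_elim
        case (elim x)
        then have "x \<in> G0" using sp by simp
        then show ?case using elim Fval by metis
      qed
    qed
  qed
  qed
  show ?thesis using P1 P2 P3 by blast
qed

end
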